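(* For $n\in\mathbb N$ let $T(n)=\{(1,0,0,n),(0,1,0,n),(0,0,1,n),(0,0,0,n)\}$. Fix $n\in\mathbb N$ and let $\sigma$ be a state whose type belongs to $T(n)$. Then $\sigma$ is $4$-interval nice.
   Context: $\mathcal U=\{0,\dots,2^m-1\}$, Ulam–Rényi game with at most 3 lies. A state is a map $\sigma:\mathcal U\to\{0,1,2,3,4\}$, type $(t_0,\dots,t_3)$ with $t_i=|\sigma^{-1}(i)|$, support $\Sigma=\{y:\sigma(y)<4\}$, final if $|\Sigma|\le1$. For $Q\subseteq\mathcal U$: $\sigma_{yes}(y)=\min\{\sigma(y)+[y\notin Q],4\}$, $\sigma_{no}(y)=\min\{\sigma(y)+[y\in Q],4\}$. An interval is $\emptyset$ or $\{x\in\mathcal U:a\le x\le b\}$; a 4-interval question is a union of at most 4 intervals. $w_q(\sigma)=\sum_{j=0}^3t_j\sum_{\ell=0}^{3-j}\binom q\ell$, $ch(\sigma)=\min\{q\ge0:w_q(\sigma)\le2^q\}$. A strategy of size $q$ for $\sigma$ is a complete binary tree of depth $q$ with internal nodes labelled by questions and edges by answers; winning if every leaf state is final. Well-shaped: order $\Sigma$ cyclically by the natural order of $\mathcal U$; $\mathcal L^\sigma$ is the minimum-length cyclic list of possibly empty arcs (consecutive blocks of $\Sigma$, each on a single level) partitioning $\Sigma$ with cyclically consecutive arcs on levels differing by exactly 1; $\sigma$ is well-shaped iff $\mathcal L^\sigma$ has exactly $2i+1$ arcs on level $i$ for $i=0,1,2$ and exactly 3 arcs on level 3. $\sigma$ is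 $4$-interval nice if it is well-shaped and there is a winning strategy for $\sigma$ of size $ch(\sigma)$ using only 4-interval questions. *)

theory Defs
  imports Main
begin

text \<open>Ulam-Renyi game with at most 3 lies over the universe U = {0,...,2^m - 1}.
  A state is a function nat => nat; only its values on U matter.\<close>

definition univ :: "nat \<Rightarrow> nat set" where
  "univ m = {0..<2^m}"

definition is_state :: "nat \<Rightarrow> (nat \<Rightarrow> nat) \<Rightarrow> bool" where
  "is_state m \<sigma> \<longleftrightarrow> (\<forall>y\<in>univ m. \<sigma> y \<le> 4)"

definition tcount :: "nat \<Rightarrow> (nat \<Rightarrow> nat) \<Rightarrow> nat \<Rightarrow> nat" where
  "tcount m \<sigma> i = card {y \<in> univ m. \<sigma> y = i}"

definition state_type :: "nat \<Rightarrow> (nat \<Rightarrow> nat) \<Rightarrow> nat \<times> nat \<times> nat \<times> nat" where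
  "state_type m \<sigma> = (tcount m \<sigma> 0, tcount m \<sigma> 1, tcount m \<sigma> 2, tcount m \<sigma> 3)"

definition support :: "nat \<Rightarrow> (nat \<Rightarrow> nat) \<Rightarrow> nat set" where
  "support m \<sigma> = {y \<in> univ m. \<sigma> y < 4}"

definition final :: "nat \<Rightarrow> (nat \<Rightarrow> nat) \<Rightarrow> bool" where
  "final m \<sigma> \<longleftrightarrow> card (support m \<sigma>) \<le> 1"

definition ans_yes :: "(nat \<Rightarrow> nat) \<Rightarrow> nat set \<Rightarrow> nat \<Rightarrow> nat" where
  "ans_yes \<sigma> Q = (\<lambda>y. min (\<sigma> y + (if y \<notin> Q then 1 else 0)) 4)"

definition ans_no :: "(nat \<Rightarrow> nat) \<Rightarrow> nat set \<Rightarrow> nat \<Rightarrow> nat" where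
  "ans_no \<sigma> Q = (\<lambda>y. min (\<sigma> y + (if y \<in> Q then 1 else 0)) 4)"

definition is_interval :: "nat \<Rightarrow> nat set \<Rightarrow> bool" where
  "is_interval m I \<longleftrightarrow> I = {} \<or> (\<exists>a b. I = {x \<in> univ m. a \<le> x \<and> x \<le> b})"

definition four_interval_question :: "nat \<Rightarrow> nat set \<Rightarrow> bool" where
  "four_interval_question m Q \<longleftrightarrow>
     (\<exists>Is. length Is \<le> 4 \<and> (\<forall>I\<in>set Is. is_interval m I) \<and> Q = \<Union>(set Is))"

definition weight :: "nat \<Rightarrow> (nat \<Rightarrow> nat) \<Rightarrow> nat \<Rightarrow> nat" where
  "weight m \<sigma> q = (\<Sum>j\<le>3. tcount m \<sigma> j * (\<Sum>l\<le>3 - j. q choose l))"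

definition character :: "nat \<Rightarrow> (nat \<Rightarrow> nat) \<Rightarrow> nat" where
  "character m \<sigma> = (LEAST q. weight m \<sigma> q \<le> 2^q)"

datatype strategy = Leaf | Node "nat set" strategy strategy

fun complete_depth :: "strategy \<Rightarrow> nat \<Rightarrow> bool" where
  "complete_depth Leaf q \<longleftrightarrow> q = 0"
| "complete_depth (Node Q s t) q \<longleftrightarrow> q > 0 \<and> complete_depth s (q - 1) \<and> complete_depth t (q - 1)"

fun questions_ok :: "(nat set \<Rightarrow> bool) \<Rightarrow> strategy \<Rightarrow> bool" where
  "questions_ok P Leaf \<longleftrightarrow> True"
| "questions_ok P (Node Q s t) \<longleftrightarrow> P Q \<and> questions_ok P s \<and> questions_ok P t"

fun winning :: "nat \<Rightarrow> (nat \<Rightarrow> nat) \<Rightarrow> strategy \<Rightarrow> bool" where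
  "winning m \<sigma> Leaf \<longleftrightarrow> final m \<sigma>"
| "winning m \<sigma> (Node Q s t) \<longleftrightarrow> winning m (ans_yes \<sigma> Q) s \<and> winning m (ans_no \<sigma> Q) t"

text \<open>Well-shaped: the support, traversed cyclically in natural order (a rotation of its
  sorted list), is split into a cyclic list of 12 possibly empty arcs, each arc on a single
  level, cyclically consecutive arcs on levels differing by exactly 1, with exactly 2i+1 arcs on
  level i (i = 0,1,2) and 3 arcs on level 3.  An arc is a pair (level, list of its elements).\<close>

definition well_shaped :: "nat \<Rightarrow> (nat \<Rightarrow> nat) \<Rightarrow> bool" where
  "well_shaped m \<sigma> \<longleftrightarrow>
    (\<exists>r arcs :: (nat \<times> nat list) list.
       concat (map snd arcs) = rotate r (sorted_list_of_set (support m \<sigma>)) \<and>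
       (\<forall>(l, a) \<in> set arcs. l \<le> 3 \<and> (\<forall>y\<in>set a. \<sigma> y = l)) \<and>
       (\<forall>i < length arcs.
          \<bar>int (fst (arcs ! i)) - int (fst (arcs ! ((i + 1) mod length arcs)))\<bar> = 1) \<and>
       (\<forall>i < 3. length (filter (\<lambda>p. fst p = i) arcs) = 2 * i + 1) \<and>
       length (filter (\<lambda>p. fst p = 3) arcs) = 3)"

definition four_interval_nice :: "nat \<Rightarrow> (nat \<Rightarrow> nat) \<Rightarrow> bool" where
  "four_interval_nice m \<sigma> \<longleftrightarrow> well_shaped m \<sigma> \<and>
     (\<exists>S. complete_depth S (character m \<sigma>) \<and>
          questions_ok (four_interval_question m) S \<and> winning m \<sigma> S)"

definition T_types :: "nat \<Rightarrow> (nat \<times> nat \<times> nat \<times> nat) set" where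
  "T_types n = {(1,0,0,n), (0,1,0,n), (0,0,1,n), (0,0,0,n)}"

end

theory Submission imports Defs begin

definition W :: "nat \<Rightarrow> nat \<Rightarrow> nat" where
  "W l q = (if l \<le> 3 then (\<Sum>i\<le>3-l. q choose i) else 0)"

definition wt :: "nat \<Rightarrow> (nat \<Rightarrow> nat) \<Rightarrow> nat \<Rightarrow> nat" where
  "wt m \<sigma> q = (\<Sum>y\<in>univ m. W (\<sigma> y) q)"

lemma finite_univ[simp]: "finite (univ m)" by (simp add: univ_def)
lemma card_univ: "card (univ m) = 2^m" by (simp add: univ_def)

lemma weight_eq:
  assumes "is_state m \<sigma>" shows "weight m \<sigma> q = wt m \<sigma> q"
proof -
  have "wt m \<sigma> q = (\<Sum>j\<in>{..4}. \<Sum>y\<in>{y\<in>univ m. \<sigma> y = j}. W (\<sigma> y) q)"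
    unfolding wt_def
    by (rule sum.group[symmetric]) (use assms in \<open>auto simp: is_state_def\<close>)
  also have "\<dots> = (\<Sum>j\<in>{..4}. tcount m \<sigma> j * W j q)"
    by (rule sum.cong) (auto simp: tcount_def)
  also have "\<dots> = (\<Sum>j\<le>3. tcount m \<sigma> j * W j q)"
    by (simp add: eval_nat_numeral W_def)
  also have "\<dots> = weight m \<sigma> q"
    unfolding weight_def by (rule sum.cong) (auto simp: W_def)
  finally show ?thesis by simp
qed

lemma sum_choose0[simp]: "(\<Sum>i\<le>k. (0::nat) choose i) = 1"
  by (induction k) auto

lemma W_rec: "l \<le> 4 \<Longrightarrow> W l (Suc q) = W l q + W (min (l+1) 4) q"
proof -
  assume "l \<le> 4"
  then have "l = 0 \<or> l = 1 \<or> l = 2 \<or> l = 3 \<or> l = 4" by auto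
  then show ?thesis by (auto simp: W_def eval_nat_numeral)
qed

lemma W_le: "l \<le> 4 \<Longrightarrow> W l q \<le> 2^q"
proof (induction q arbitrary: l)
  case 0 then show ?case by (simp add: W_def)
next
  case (Suc q)
  have "W l (Suc q) = W l q + W (min (l+1) 4) q" using Suc.prems by (rule W_rec)
  also have "\<dots> \<le> 2^q + 2^q" using Suc.IH Suc.prems by (intro add_mono) auto
  finally show ?case by simp
qed

lemma W_mono0: "W l q \<le> W 0 q"
  unfolding W_def by (auto intro: sum_mono2)

lemma W0_bound: "q \<ge> 7 \<Longrightarrow> 2 * W 0 q \<le> 2^q"
proof (induction q rule: dec_induct)
  case base then show ?case by (simp add: W_def eval_nat_numeral)
next
  case (step q)
  have "W 0 (Suc q) = W 0 q + W 1 q" using W_rec[of 0 q] by simp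
  also have "\<dots> \<le> 2 * W 0 q" using W_mono0[of 1 q] by simp
  finally show ?case using step by simp
qed

definition inv3 :: "nat \<Rightarrow> (nat \<Rightarrow> nat) \<Rightarrow> nat \<Rightarrow> bool" where
  "inv3 m \<sigma> x \<longleftrightarrow> (\<forall>y\<in>support m \<sigma>. y \<noteq> x \<longrightarrow> \<sigma> y = 3)"

lemma wt_split:
  assumes st: "is_state m \<sigma>" and iv: "inv3 m \<sigma> x"
  shows "wt m \<sigma> q = (if x \<in> univ m then W (\<sigma> x) q else 0) + card (support m \<sigma> - {x})"
proof -
  have a: "wt m \<sigma> q = (if x \<in> univ m then W (\<sigma> x) q else 0) + (\<Sum>y\<in>univ m - {x}. W (\<sigma> y) q)"
  proof (cases "x \<in> univ m")
    case True then show ?thesis unfolding wt_def by (simp add: sum.remove)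
  next
    case False then show ?thesis unfolding wt_def by simp
  qed
  have b: "(\<Sum>y\<in>univ m - {x}. W (\<sigma> y) q) = (\<Sum>y\<in>univ m - {x}. if \<sigma> y < 4 then 1 else 0)"
  proof (rule sum.cong)
    fix y assume y: "y \<in> univ m - {x}"
    show "W (\<sigma> y) q = (if \<sigma> y < 4 then 1 else 0)"
    proof (cases "\<sigma> y < 4")
      case True
      then have "\<sigma> y = 3" using iv y by (auto simp: inv3_def support_def)
      then show ?thesis by (simp add: W_def)
    next
      case False
      then have "\<sigma> y = 4" using st y by (auto simp: is_state_def)
      then show ?thesis by (simp add: W_def)
    qed
  qed simp
  have c: "(\<Sum>y\<in>univ m - {x}. if \<sigma> y < 4 then 1 else 0) = card (support m \<sigma> - {x})"
  proof -
    have "(\<Sum>y\<in>univ m - {x}. if \<sigma> y < 4 then 1 else 0) = (\<Sum>y\<in>{y\<in>univ m - {x}. \<sigma> y < 4}. (1::nat))"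
      by (rule sum.inter_filter[symmetric]) simp
    also have "{y\<in>univ m - {x}. \<sigma> y < 4} = support m \<sigma> - {x}" by (auto simp: support_def)
    finally show ?thesis by simp
  qed
  show ?thesis using a b c by simp
qed

lemma wt0: assumes st: "is_state m \<sigma>" shows "wt m \<sigma> 0 = card (support m \<sigma>)"
proof -
  have "wt m \<sigma> 0 = (\<Sum>y\<in>univ m. if \<sigma> y < 4 then 1 else 0)"
    unfolding wt_def
  proof (rule sum.cong)
    fix y assume "y \<in> univ m"
    then have "\<sigma> y \<le> 4" using st by (auto simp: is_state_def)
    then show "W (\<sigma> y) 0 = (if \<sigma> y < 4 then 1 else 0)" by (auto simp: W_def)
  qed simp
  also have "\<dots> = (\<Sum>y\<in>{y\<in>univ m. \<sigma> y < 4}. (1::nat))"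
    by (rule sum.inter_filter[symmetric]) simp
  finally show ?thesis by (simp add: support_def)
qed

lemma card_prefix:
  assumes "finite K" shows "1 \<le> a \<Longrightarrow> a \<le> card K \<Longrightarrow> \<exists>b. card {y\<in>K. y \<le> (b::nat)} = a"
proof (induction a)
  case 0 then show ?case by simp
next
  case (Suc a)
  show ?case
  proof (cases "a = 0")
    case True
    have ne: "K \<noteq> {}" using Suc.prems by auto
    have m1: "Min K \<in> K" using assms ne by simp
    have m2: "\<forall>y\<in>K. Min K \<le> y" using assms by simp
    have "{y\<in>K. y \<le> Min K} = {Min K}" using m1 m2 by (auto intro: antisym)
    then have "card {y\<in>K. y \<le> Min K} = Suc a" using True by simp
    then show ?thesis by blast
  next
    case False
    then obtain b where b: "card {y\<in>K. y \<le> b} = a" using Suc by auto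
    let ?K' = "{y\<in>K. b < y}"
    have "?K' \<noteq> {}"
    proof
      assume "?K' = {}"
      then have "{y\<in>K. y \<le> b} = K" by auto
      then show False using b Suc.prems by auto
    qed
    moreover have fK': "finite ?K'" using assms by auto
    ultimately have mK: "Min ?K' \<in> ?K'" by (rule Min_in[rotated])
    have mK2: "\<forall>y\<in>K. b < y \<longrightarrow> Min ?K' \<le> y" using fK' by simp
    have "{y\<in>K. y \<le> Min ?K'} = insert (Min ?K') {y\<in>K. y \<le> b}"
      using mK mK2 by (auto simp: not_le)
    moreover have "Min ?K' \<notin> {y\<in>K. y \<le> b}" using mK by auto
    ultimately have "card {y\<in>K. y \<le> Min ?K'} = Suc a" using assms b by simp
    then show ?thesis by blast
  qed
qed

lemma interval_exists:
  assumes "K \<subseteq> univ m" "a \<le> card K"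
  shows "\<exists>P. is_interval m P \<and> card (K \<inter> P) = a"
proof (cases "a = 0")
  case True then show ?thesis by (intro exI[of _ "{}"]) (simp add: is_interval_def)
next
  case False
  have fK: "finite K" using finite_subset[OF assms(1) finite_univ] .
  then obtain b where b: "card {y\<in>K. y \<le> b} = a" using card_prefix[OF fK, of a] assms False by auto
  have "K \<inter> {x \<in> univ m. 0 \<le> x \<and> x \<le> b} = {y\<in>K. y \<le> b}" using assms(1) by auto
  then show ?thesis using b unfolding is_interval_def by (intro exI[of _ "{x \<in> univ m. 0 \<le> x \<and> x \<le> b}"]) auto
qed


lemma final_of_card: "card (support m \<sigma>) \<le> 1 \<Longrightarrow> final m \<sigma>" by (simp add: final_def)

lemma inv3_mono:
  assumes "inv3 m \<sigma> x" "\<forall>y\<in>univ m. \<sigma> y \<le> \<tau> y"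
  shows "inv3 m \<tau> x"
  unfolding inv3_def
proof (intro ballI impI)
  fix y assume y: "y \<in> support m \<tau>" "y \<noteq> x"
  then have "\<sigma> y < 4" "y \<in> univ m" using assms(2) by (auto simp: support_def)
  then have "\<sigma> y = 3" using assms(1) y by (auto simp: inv3_def support_def)
  moreover have "\<tau> y < 4" using y by (auto simp: support_def)
  ultimately show "\<tau> y = 3" using assms(2) \<open>y \<in> univ m\<close> by force
qed

lemma main:
  "is_state m \<sigma> \<Longrightarrow> inv3 m \<sigma> x \<Longrightarrow> wt m \<sigma> q \<le> 2^q \<Longrightarrow>
   \<exists>S. complete_depth S q \<and> questions_ok (four_interval_question m) S \<and> winning m \<sigma> S"
proof (induction q arbitrary: \<sigma>)
  case 0
  then have "final m \<sigma>" using wt0[of m \<sigma>] by (simp add: final_def)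
  then show ?case by (intro exI[of _ Leaf]) simp
next
  case (Suc q)
  note st = Suc.prems(1) and iv = Suc.prems(2)
  define K where "K = support m \<sigma> - {x}"
  define k where "k = card K"
  define wy where "wy = (if x \<in> univ m then W (\<sigma> x) q else 0)"
  define wn where "wn = (if x \<in> univ m then W (min (\<sigma> x + 1) 4) q else 0)"
  have sx: "x \<in> univ m \<Longrightarrow> \<sigma> x \<le> 4" using st by (simp add: is_state_def)
  have wsplit: "wt m \<sigma> (Suc q) = wy + wn + k"
    using wt_split[OF st iv, of "Suc q"] W_rec[of "\<sigma> x" q] sx
    by (auto simp: wy_def wn_def k_def K_def)
  have wy_le: "wy \<le> 2^q" using W_le sx by (auto simp: wy_def)
  have wn_le: "wn \<le> 2^q" using W_le sx by (auto simp: wn_def)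
  define a where "a = min k (2^q - wy)"
  have Ku: "K \<subseteq> univ m" by (auto simp: K_def support_def)
  obtain P where P: "is_interval m P" "card (K \<inter> P) = a"
    using interval_exists[OF Ku, of a] by (auto simp: a_def k_def)
  define I1 where "I1 = {y \<in> univ m. x \<le> y \<and> y \<le> x}"
  define Q where "Q = I1 \<union> P"
  have fq: "four_interval_question m Q"
    unfolding four_interval_question_def
  proof (intro exI[of _ "[I1, P]"])
    have "is_interval m I1" unfolding is_interval_def I1_def by blast
    then show "length [I1, P] \<le> 4 \<and> (\<forall>I\<in>set [I1, P]. is_interval m I) \<and> Q = \<Union> (set [I1, P])"
      using P(1) by (auto simp: Q_def)
  qed
  define \<sigma>1 where "\<sigma>1 = ans_yes \<sigma> Q"
  define \<sigma>2 where "\<sigma>2 = ans_no \<sigma> Q"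
  have st1: "is_state m \<sigma>1" by (simp add: is_state_def \<sigma>1_def ans_yes_def)
  have st2: "is_state m \<sigma>2" by (simp add: is_state_def \<sigma>2_def ans_no_def)
  have iv1: "inv3 m \<sigma>1 x" by (rule inv3_mono[OF iv]) (use st in \<open>auto simp: is_state_def \<sigma>1_def ans_yes_def\<close>)
  have iv2: "inv3 m \<sigma>2 x" by (rule inv3_mono[OF iv]) (use st in \<open>auto simp: is_state_def \<sigma>2_def ans_no_def\<close>)
  have K3: "\<And>y. y \<in> K \<Longrightarrow> \<sigma> y = 3 \<and> y \<in> univ m \<and> y \<noteq> x"
    using iv by (auto simp: K_def inv3_def support_def)
  have KI1: "K \<inter> I1 = {}" by (auto simp: K_def I1_def)
  have supp1: "support m \<sigma>1 - {x} = K \<inter> P"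
  proof -
    have "y \<in> support m \<sigma>1 - {x} \<longleftrightarrow> y \<in> K \<inter> Q" for y
    proof (cases "y \<in> K")
      case True
      then show ?thesis using K3[OF True] by (auto simp: \<sigma>1_def ans_yes_def support_def)
    next
      case False
      then have "y \<in> univ m \<Longrightarrow> y \<noteq> x \<Longrightarrow> \<sigma> y \<ge> 4" by (auto simp: K_def support_def)
      then show ?thesis using False by (cases "y = x") (auto simp: \<sigma>1_def ans_yes_def support_def)
    qed
    then have "support m \<sigma>1 - {x} = K \<inter> Q" by blast
    then show ?thesis using KI1 by (auto simp: Q_def)
  qed
  have supp2: "support m \<sigma>2 - {x} = K - P"
  proof -
    have "y \<in> support m \<sigma>2 - {x} \<longleftrightarrow> y \<in> K - Q" for y
    proof (cases "y \<in> K")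
      case True
      then show ?thesis using K3[OF True] by (auto simp: \<sigma>2_def ans_no_def support_def)
    next
      case False
      then have "y \<in> univ m \<Longrightarrow> y \<noteq> x \<Longrightarrow> \<sigma> y \<ge> 4" by (auto simp: K_def support_def)
      then show ?thesis using False by (cases "y = x") (auto simp: \<sigma>2_def ans_no_def support_def)
    qed
    then have "support m \<sigma>2 - {x} = K - Q" by blast
    then show ?thesis using KI1 by (auto simp: Q_def)
  qed
  have fK: "finite K" using finite_subset[OF Ku finite_univ] .
  have cK2: "card (K - P) = k - a"
    using card_Diff_subset_Int[of K P] fK P(2) by (simp add: k_def)
  have xQ: "x \<in> univ m \<Longrightarrow> x \<in> Q" by (simp add: Q_def I1_def)
  have w1: "wt m \<sigma>1 q = wy + a"
    using wt_split[OF st1 iv1, of q] supp1 P(2) xQ sx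
    by (auto simp: wy_def \<sigma>1_def ans_yes_def)
  have w2: "wt m \<sigma>2 q = wn + (k - a)"
    using wt_split[OF st2 iv2, of q] supp2 cK2 xQ sx
    by (auto simp: wn_def \<sigma>2_def ans_no_def)
  have b1: "wt m \<sigma>1 q \<le> 2^q" using w1 wy_le by (simp add: a_def)
  have b2: "wt m \<sigma>2 q \<le> 2^q" using w2 wn_le wsplit Suc.prems(3) by (auto simp: a_def)
  obtain S1 where S1: "complete_depth S1 q" "questions_ok (four_interval_question m) S1" "winning m \<sigma>1 S1"
    using Suc.IH[OF st1 iv1 b1] by blast
  obtain S2 where S2: "complete_depth S2 q" "questions_ok (four_interval_question m) S2" "winning m \<sigma>2 S2"
    using Suc.IH[OF st2 iv2 b2] by blast
  show ?case
    by (intro exI[of _ "Node Q S1 S2"]) (simp add: S1 S2 fq \<sigma>1_def[symmetric] \<sigma>2_def[symmetric])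
qed


lemma cyc_check:
  assumes "\<forall>p\<in>set (zip xs (rotate1 xs)). \<bar>int (fst (fst p)) - int (fst (snd p))\<bar> = 1"
  shows "\<forall>i < length xs. \<bar>int (fst (xs ! i)) - int (fst (xs ! ((i + 1) mod length xs)))\<bar> = 1"
proof (intro allI impI)
  fix i assume i: "i < length xs"
  have "(xs!i, rotate1 xs ! i) \<in> set (zip xs (rotate1 xs))"
    using i by (auto simp: set_zip)
  then show "\<bar>int (fst (xs ! i)) - int (fst (xs ! ((i + 1) mod length xs)))\<bar> = 1"
    using assms i by (auto simp: nth_rotate1)
qed

lemma ws_x:
  assumes x: "x \<in> support m \<sigma>" "\<sigma> x < 3" and iv: "inv3 m \<sigma> x"
  shows "well_shaped m \<sigma>"
proof -
  define Ls where "Ls = sorted_list_of_set (support m \<sigma>)"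
  have fin: "finite (support m \<sigma>)" by (simp add: support_def)
  have setL: "set Ls = support m \<sigma>" and dL: "distinct Ls" using fin by (auto simp: Ls_def)
  have "x \<in> set Ls" using setL x by simp
  then obtain r where r: "r < length Ls" "Ls ! r = x" by (auto simp: in_set_conv_nth)
  define rest where "rest = drop (Suc r) Ls @ take r Ls"
  have rot: "rotate r Ls = x # rest"
    using r by (simp add: rotate_drop_take rest_def Cons_nth_drop_Suc[symmetric])
  have "distinct (x # rest)" using dL by (metis rot distinct_rotate)
  moreover have "set (x # rest) = support m \<sigma>" using setL by (metis rot set_rotate)
  ultimately have rest3: "\<forall>y\<in>set rest. \<sigma> y = 3" using iv by (auto simp: inv3_def)
  have "\<sigma> x = 0 \<or> \<sigma> x = 1 \<or> \<sigma> x = 2" using x by auto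
  then obtain arcs where
    c1: "concat (map snd arcs) = x # rest" and
    c2: "\<forall>(l, a) \<in> set arcs. l \<le> 3 \<and> (\<forall>y\<in>set a. \<sigma> y = l)" and
    c3: "\<forall>p\<in>set (zip arcs (rotate1 arcs)). \<bar>int (fst (fst p)) - int (fst (snd p))\<bar> = 1" and
    c4: "\<forall>i < 3. length (filter (\<lambda>p. fst p = i) arcs) = 2 * i + 1" and
    c5: "length (filter (\<lambda>p. fst p = 3) arcs) = 3"
  proof (elim disjE)
    assume h: "\<sigma> x = 0"
    show ?thesis
      by (rule that[of "[(0,[x]),(1,[]),(2,[]),(3,rest),(2,[]),(3,[]),(2,[]),(3,[]),(2,[]),(1,[]),(2,[]),(1,[])]"])
         (use h rest3 in \<open>simp_all add: All_less_Suc eval_nat_numeral\<close>)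
  next
    assume h: "\<sigma> x = 1"
    show ?thesis
      by (rule that[of "[(1,[x]),(2,[]),(3,rest),(2,[]),(3,[]),(2,[]),(3,[]),(2,[]),(1,[]),(2,[]),(1,[]),(0,[])]"])
         (use h rest3 in \<open>simp_all add: All_less_Suc eval_nat_numeral\<close>)
  next
    assume h: "\<sigma> x = 2"
    show ?thesis
      by (rule that[of "[(2,[x]),(3,rest),(2,[]),(3,[]),(2,[]),(3,[]),(2,[]),(1,[]),(2,[]),(1,[]),(0,[]),(1,[])]"])
         (use h rest3 in \<open>simp_all add: All_less_Suc eval_nat_numeral\<close>)
  qed
  show ?thesis unfolding well_shaped_def
    apply (rule exI[of _ r], rule exI[of _ arcs])
    apply (intro conjI)
    using c1 rot apply (simp add: Ls_def)
    using c2 apply assumption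
    using cyc_check[OF c3] apply assumption
    using c4 apply assumption
    using c5 apply assumption
    done
qed

lemma ws_none:
  assumes iv: "\<forall>y\<in>support m \<sigma>. \<sigma> y = 3"
  shows "well_shaped m \<sigma>"
proof -
  define Ls where "Ls = sorted_list_of_set (support m \<sigma>)"
  have fin: "finite (support m \<sigma>)" by (simp add: support_def)
  have setL: "set Ls = support m \<sigma>" using fin by (auto simp: Ls_def)
  define arcs where "arcs = [(3::nat,Ls),(2,[]),(3,[]),(2,[]),(3,[]),(2,[]),(1,[]),(2,[]),(1,[]),(0,[]),(1,[]),(2,[])]"
  have c3: "\<forall>p\<in>set (zip arcs (rotate1 arcs)). \<bar>int (fst (fst p)) - int (fst (snd p))\<bar> = 1"
    by (simp add: arcs_def)
  show ?thesis unfolding well_shaped_def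
  proof (rule exI[of _ 0], rule exI[of _ arcs], intro conjI)
    show "concat (map snd arcs) = rotate 0 (sorted_list_of_set (support m \<sigma>))"
      by (simp add: arcs_def Ls_def)
    show "\<forall>(l, a)\<in>set arcs. l \<le> 3 \<and> (\<forall>y\<in>set a. \<sigma> y = l)"
      using iv setL by (simp add: arcs_def)
    show "\<forall>i<length arcs. \<bar>int (fst (arcs ! i)) - int (fst (arcs ! ((i + 1) mod length arcs)))\<bar> = 1"
      by (rule cyc_check[OF c3])
    show "\<forall>i<3. length (filter (\<lambda>p. fst p = i) arcs) = 2 * i + 1"
      by (simp add: arcs_def All_less_Suc eval_nat_numeral)
    show "length (filter (\<lambda>p. fst p = 3) arcs) = 3"
      by (simp add: arcs_def)
  qed
qed


lemma low_card:
  assumes "state_type m \<sigma> \<in> T_types n"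
  shows "card {y\<in>univ m. \<sigma> y < 3} \<le> 1"
proof -
  have t: "tcount m \<sigma> 0 + tcount m \<sigma> 1 + tcount m \<sigma> 2 \<le> 1"
    using assms by (auto simp: T_types_def state_type_def)
  have e: "{y\<in>univ m. \<sigma> y < 3} = {y\<in>univ m. \<sigma> y = 0} \<union> ({y\<in>univ m. \<sigma> y = 1} \<union> {y\<in>univ m. \<sigma> y = 2})"
    by auto
  have "card {y\<in>univ m. \<sigma> y < 3} = tcount m \<sigma> 0 + (tcount m \<sigma> 1 + tcount m \<sigma> 2)"
    unfolding e tcount_def
    by (subst card_Un_disjoint, simp, simp, force)+ simp
  then show ?thesis using t by simp
qed

theorem lemma8:
  fixes m n :: nat and \<sigma> :: "nat \<Rightarrow> nat"
  assumes "is_state m \<sigma>"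
    and "state_type m \<sigma> \<in> T_types n"
  shows "four_interval_nice m \<sigma>"
proof -
  note st = assms(1)
  have fL: "finite {y\<in>univ m. \<sigma> y < 3}" by simp
  have cL: "card {y\<in>univ m. \<sigma> y < 3} \<le> 1" using low_card[OF assms(2)] .
  obtain x where iv: "inv3 m \<sigma> x" and ws: "well_shaped m \<sigma>"
  proof (cases "{y\<in>univ m. \<sigma> y < 3} = {}")
    case True
    then have a: "\<forall>y\<in>support m \<sigma>. \<sigma> y = 3" by (force simp: support_def)
    then have "inv3 m \<sigma> 0" by (simp add: inv3_def)
    then show ?thesis using that ws_none[OF a] by blast
  next
    case False
    then obtain x where "{y\<in>univ m. \<sigma> y < 3} = {x}" using cL fL
      by (metis card_0_eq card_1_singletonE le_SucE One_nat_def le_zero_eq)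
    then have x: "x \<in> univ m" "\<sigma> x < 3" and o: "\<And>y. y \<in> univ m \<Longrightarrow> \<sigma> y < 3 \<Longrightarrow> y = x"
      by auto
    have iv: "inv3 m \<sigma> x" unfolding inv3_def support_def
      using o by fastforce
    have "x \<in> support m \<sigma>" using x by (simp add: support_def)
    then show ?thesis using that ws_x[OF _ x(2) iv] iv by blast
  qed
  define q0 where "q0 = max 7 (m+1)"
  have "wt m \<sigma> q0 \<le> 2^q0"
  proof -
    have a1: "wt m \<sigma> q0 \<le> W 0 q0 + card (support m \<sigma> - {x})"
      using wt_split[OF st iv, of q0] W_mono0[of "\<sigma> x" q0] by auto
    have a2: "card (support m \<sigma> - {x}) \<le> 2^m"
      using card_mono[of "univ m" "support m \<sigma> - {x}"] card_univ[of m] by (auto simp: support_def)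
    obtain p where p: "q0 = Suc p" and pm: "m \<le> p" 
    proof -
      have "q0 = Suc (q0 - 1)" "m \<le> q0 - 1" by (auto simp: q0_def)
      then show ?thesis using that by blast
    qed
    have a3: "(2::nat)^m \<le> 2^p" using pm by (intro power_increasing) auto
    have a4: "2 * W 0 q0 \<le> 2^q0" by (rule W0_bound) (simp add: q0_def)
    have a5: "(2::nat)^q0 = 2 * 2^p" using p by simp
    show ?thesis using a1 a2 a3 a4 a5 by linarith
  qed
  then have ex: "\<exists>q. weight m \<sigma> q \<le> 2^q" using weight_eq[OF st] by metis
  have "weight m \<sigma> (character m \<sigma>) \<le> 2^(character m \<sigma>)"
    unfolding character_def by (rule LeastI_ex[OF ex])
  then have "wt m \<sigma> (character m \<sigma>) \<le> 2^(character m \<sigma>)" using weight_eq[OF st] by simp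
  then obtain S where "complete_depth S (character m \<sigma>)" "questions_ok (four_interval_question m) S" "winning m \<sigma> S"
    using main[OF st iv] by blast
  then show ?thesis using ws unfolding four_interval_nice_def by blast
qed

end
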